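(* Let $\varrho$ be a proximate order, $\sigma,\tau>0$, $f\in A_{\varrho,\sigma}$ and $g\in A_{\varrho,\tau}$. Then $f\star_Lg\in A_{\varrho,\sigma+\tau}$ and $$\|f\star_Lg\|_{\varrho,\sigma+\tau}\le 2^{\frac{n+4}{2}}\|f\|_{\varrho,\sigma}\|g\|_{\varrho,\tau},$$ where $n$ is the number of imaginary units of the Clifford algebra $\mathbb{R}_n$.
   Context: $\mathbb{R}_n$ is the real Clifford algebra generated by $e_1,\dots,e_n$ with $e_ie_j=-e_je_i$ ($i\ne j$), $e_i^2=-1$, with Euclidean norm $|a|^2=\sum_Aa_A^2$ for $a=\sum_Aa_Ae_A$. Paravectors $x=x_0+\sum x_\ell e_\ell$ are identified with $\mathbb{R}^{n+1}$; $\mathbb{S}=\{\sum x_\ell e_\ell:\sum x_\ell^2=1\}$. $\mathcal{SM}_L(\mathbb{R}^{n+1})$ is the set of entire left slice monogenic functions: $f(u+jv)=f_0(u,v)+jf_1(u,v)$ for all $u,v\in\mathbb{R}$, $j\in\mathbb{S}$, with $f_0,f_1:\mathbb{R}^2\to\mathbb{R}_n$ continuously differentiable, $f_0$ even and $f_1$ odd in $v$, $\partial_uf_0=\partial_vf_1$, $\partial_vf_0=-\partial_uf_1$. The star product is $f\star_Lg=f_0g_0-f_1g_1+j(f_1g_0+f_0g_1)$. A proximate order is a differentiable $\varrho:[0,\infty)\to[0,\infty)$ with $\lim_{r\to\infty}\varrho(r)=\rho>0$ and $\lim_{r\to\infty}\varrho'(r)r\ln r=0$. $A_{\varrho,\sigma}=\{f\in\mathcal{SM}_L(\mathbb{R}^{n+1}):\|f\|_{\varrho,\sigma}:=\sup_x|f(x)|e^{-\sigma|x|^{\varrho(|x|)}}<\infty\}$.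 *)

theory Defs
  imports "HOL-Analysis.Analysis"
begin

text \<open>Real Clifford algebra R_n with generators e_1,...,e_n (e_i^2 = -1).
  An element a = sum_A a_A e_A is represented by its coefficient function
  nat set => real; elements of R_n are those whose coefficients vanish
  outside the subsets of {1..n}.\<close>

type_synonym cl = "nat set \<Rightarrow> real"

definition cl :: "nat \<Rightarrow> cl set" where
  "cl n = {a. \<forall>A. \<not> A \<subseteq> {1..n} \<longrightarrow> a A = 0}"

text \<open>Sign in e_A e_B = sign * e_(A symdiff B), for e_i e_j = - e_j e_i, e_i^2 = -1.\<close>
definition cl_sign :: "nat set \<Rightarrow> nat set \<Rightarrow> real" where
  "cl_sign A B = (-1) ^ (card {(a, b). a \<in> A \<and> b \<in> B \<and> b < a} + card (A \<inter> B))"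

definition cl_mult :: "nat \<Rightarrow> cl \<Rightarrow> cl \<Rightarrow> cl" where
  "cl_mult n a b = (\<lambda>C. \<Sum>A\<in>Pow {1..n}. \<Sum>B\<in>Pow {1..n}.
      if (A - B) \<union> (B - A) = C then cl_sign A B * a A * b B else 0)"

definition cl_add :: "cl \<Rightarrow> cl \<Rightarrow> cl" where
  "cl_add a b = (\<lambda>C. a C + b C)"

definition cl_sub :: "cl \<Rightarrow> cl \<Rightarrow> cl" where
  "cl_sub a b = (\<lambda>C. a C - b C)"

definition cl_scale :: "real \<Rightarrow> cl \<Rightarrow> cl" where
  "cl_scale r a = (\<lambda>C. r * a C)"

definition cl_scalar :: "real \<Rightarrow> cl" where
  "cl_scalar s = (\<lambda>C. if C = {} then s else 0)"

definition cl_unit :: "nat \<Rightarrow> cl" where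
  "cl_unit i = (\<lambda>C. if C = {i} then 1 else 0)"

definition clnorm :: "nat \<Rightarrow> cl \<Rightarrow> real" where
  "clnorm n a = sqrt (\<Sum>A\<in>Pow {1..n}. (a A)\<^sup>2)"

text \<open>Paravectors x_0 + sum x_l e_l (identified with R^(n+1)).\<close>
definition paravec :: "nat \<Rightarrow> cl set" where
  "paravec n = {x \<in> cl n. \<forall>A. 2 \<le> card A \<longrightarrow> x A = 0}"

definition imag_sphere :: "nat \<Rightarrow> cl set" where
  "imag_sphere n = {j \<in> paravec n. j {} = 0 \<and> (\<Sum>l=1..n. (j {l})\<^sup>2) = 1}"

definition slice_decomp :: "nat \<Rightarrow> (cl \<Rightarrow> cl) \<Rightarrow> (real \<Rightarrow> real \<Rightarrow> cl) \<Rightarrow> (real \<Rightarrow> real \<Rightarrow> cl) \<Rightarrow> bool" where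
  "slice_decomp n f f0 f1 \<longleftrightarrow>
     (\<forall>u v. f0 u v \<in> cl n \<and> f1 u v \<in> cl n) \<and>
     (\<forall>u v A. f0 u (-v) A = f0 u v A \<and> f1 u (-v) A = - f1 u v A) \<and>
     (\<forall>u v j. j \<in> imag_sphere n \<longrightarrow>
        f (cl_add (cl_scalar u) (cl_scale v j)) = cl_add (f0 u v) (cl_mult n j (f1 u v))) \<and>
     (\<exists>p0u p0v p1u p1v :: real \<Rightarrow> real \<Rightarrow> cl. \<forall>A.
        (\<forall>u v. ((\<lambda>t. f0 t v A) has_real_derivative p0u u v A) (at u) \<and>
               ((\<lambda>t. f0 u t A) has_real_derivative p0v u v A) (at v) \<and>
               ((\<lambda>t. f1 t v A) has_real_derivative p1u u v A) (at u) \<and>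
               ((\<lambda>t. f1 u t A) has_real_derivative p1v u v A) (at v)) \<and>
        continuous_on UNIV (\<lambda>z. p0u (fst z) (snd z) A) \<and>
        continuous_on UNIV (\<lambda>z. p0v (fst z) (snd z) A) \<and>
        continuous_on UNIV (\<lambda>z. p1u (fst z) (snd z) A) \<and>
        continuous_on UNIV (\<lambda>z. p1v (fst z) (snd z) A) \<and>
        (\<forall>u v. p0u u v A = p1v u v A \<and> p0v u v A = - p1u u v A))"

definition SM_L :: "nat \<Rightarrow> (cl \<Rightarrow> cl) set" where
  "SM_L n = {f. \<exists>f0 f1. slice_decomp n f f0 f1}"

text \<open>Left star product f *_L g (u+jv) = f0g0 - f1g1 + j(f1g0 + f0g1), with
  x = u + jv, u = x_0, v = |x - x_0|, j = (x - x_0)/v (j = e_1 if v = 0).\<close>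
definition star_L :: "nat \<Rightarrow> (cl \<Rightarrow> cl) \<Rightarrow> (cl \<Rightarrow> cl) \<Rightarrow> cl \<Rightarrow> cl" where
  "star_L n f g x =
    (let (f0, f1) = (SOME p. slice_decomp n f (fst p) (snd p));
         (g0, g1) = (SOME p. slice_decomp n g (fst p) (snd p));
         u = x {};
         w = (\<lambda>C. if C = {} then 0 else x C);
         v = clnorm n w;
         j = (if v = 0 then cl_unit 1 else cl_scale (1 / v) w)
     in cl_add (cl_sub (cl_mult n (f0 u v) (g0 u v)) (cl_mult n (f1 u v) (g1 u v)))
               (cl_mult n j (cl_add (cl_mult n (f1 u v) (g0 u v)) (cl_mult n (f0 u v) (g1 u v)))))"

definition proximate_order :: "(real \<Rightarrow> real) \<Rightarrow> bool" where
  "proximate_order \<rho> \<longleftrightarrow>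
     (\<forall>r\<ge>0. \<rho> differentiable (at r within {0..})) \<and>
     (\<forall>r\<ge>0. \<rho> r \<ge> 0) \<and>
     (\<exists>\<rho>0>0. (\<rho> \<longlongrightarrow> \<rho>0) at_top) \<and>
     ((\<lambda>r. deriv \<rho> r * r * ln r) \<longlongrightarrow> 0) at_top"

definition A_weight :: "nat \<Rightarrow> (real \<Rightarrow> real) \<Rightarrow> real \<Rightarrow> (cl \<Rightarrow> cl) \<Rightarrow> cl \<Rightarrow> real" where
  "A_weight n \<rho> \<sigma> f x = clnorm n (f x) * exp (- \<sigma> * clnorm n x powr \<rho> (clnorm n x))"

definition A_space :: "nat \<Rightarrow> (real \<Rightarrow> real) \<Rightarrow> real \<Rightarrow> (cl \<Rightarrow> cl) set" where
  "A_space n \<rho> \<sigma> = {f \<in> SM_L n. bdd_above (A_weight n \<rho> \<sigma> f ` paravec n)}"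

definition A_norm :: "nat \<Rightarrow> (real \<Rightarrow> real) \<Rightarrow> real \<Rightarrow> (cl \<Rightarrow> cl) \<Rightarrow> real" where
  "A_norm n \<rho> \<sigma> f = (SUP x\<in>paravec n. A_weight n \<rho> \<sigma> f x)"

end

theory Submission
  imports Defs
begin


abbreviation sdf :: "nat set \<Rightarrow> nat set \<Rightarrow> nat set" where
  "sdf A B \<equiv> (A - B) \<union> (B - A)"

lemma sd_reindex:
  assumes "C \<subseteq> {1..n}"
  shows "(\<Sum>A\<in>Pow {1..n}. h (sdf A C)) = (\<Sum>A\<in>Pow {1..n}. h A)"
  by (rule sum.reindex_bij_witness[where i="\<lambda>A. sdf A C" and j="\<lambda>A. sdf A C"])
     (use assms in auto)

lemma mult_expand:
  assumes "C \<subseteq> {1..n}"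
  shows "cl_mult n a b C = (\<Sum>A\<in>Pow {1..n}. cl_sign A (sdf A C) * a A * b (sdf A C))"
  unfolding cl_mult_def
proof (rule sum.cong[OF refl])
  fix A assume A: "A \<in> Pow {1..n}"
  have eq: "\<And>B. ((A - B) \<union> (B - A) = C) = (B = sdf A C)" by blast
  have "sdf A C \<in> Pow {1..n}" using A assms by auto
  then show "(\<Sum>B\<in>Pow {1..n}. if (A - B) \<union> (B - A) = C then cl_sign A B * a A * b B else 0) =
    cl_sign A (sdf A C) * a A * b (sdf A C)"
    unfolding eq by (simp add: sum.delta)
qed

lemma mult_outside:
  assumes "\<not> C \<subseteq> {1..n}"
  shows "cl_mult n a b C = 0"
  unfolding cl_mult_def using assms by (intro sum.neutral ballI) (auto intro!: sum.neutral)

lemma mult_in_cl: "cl_mult n a b \<in> cl n"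
  unfolding cl_def using mult_outside by auto

lemma clnorm_L2: "clnorm n a = L2_set a (Pow {1..n})"
  by (simp add: clnorm_def L2_set_def)

lemma clnorm_nonneg: "clnorm n a \<ge> 0"
  by (simp add: clnorm_def sum_nonneg)

lemma sign_sq: "(cl_sign A B)^2 = 1"
  unfolding cl_sign_def by (simp flip: power_mult add: mult.commute power_mult)

lemma sign_abs: "\<bar>cl_sign A B\<bar> = 1"
  unfolding cl_sign_def by simp

lemma mult_norm:
  "clnorm n (cl_mult n a b) \<le> 2 powr (real n / 2) * clnorm n a * clnorm n b"
proof -
  have pt: "(cl_mult n a b C)^2 \<le> (clnorm n a * clnorm n b)^2" if C: "C \<in> Pow {1..n}" for C
  proof -
    have "\<bar>cl_mult n a b C\<bar> \<le> (\<Sum>A\<in>Pow {1..n}. \<bar>a A\<bar> * \<bar>b (sdf A C)\<bar>)"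
    proof -
      have "\<bar>cl_mult n a b C\<bar> = \<bar>\<Sum>A\<in>Pow {1..n}. cl_sign A (sdf A C) * a A * b (sdf A C)\<bar>"
        using C by (subst mult_expand) auto
      also have "\<dots> \<le> (\<Sum>A\<in>Pow {1..n}. \<bar>cl_sign A (sdf A C) * a A * b (sdf A C)\<bar>)"
        by (rule sum_abs)
      also have "\<dots> = (\<Sum>A\<in>Pow {1..n}. \<bar>a A\<bar> * \<bar>b (sdf A C)\<bar>)"
        by (simp only: abs_mult sign_abs mult_1)
      finally show ?thesis .
    qed
    also have "\<dots> \<le> L2_set a (Pow {1..n}) * L2_set (\<lambda>A. b (sdf A C)) (Pow {1..n})"
      by (rule L2_set_mult_ineq)
    also have "L2_set (\<lambda>A. b (sdf A C)) (Pow {1..n}) = L2_set b (Pow {1..n})"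
      unfolding L2_set_def using sd_reindex[of C n "\<lambda>A. (b A)^2"] C by simp
    finally have "\<bar>cl_mult n a b C\<bar> \<le> clnorm n a * clnorm n b" by (simp add: clnorm_L2)
    then show ?thesis by (metis abs_ge_zero order_trans power_mono power2_abs)
  qed
  have "(\<Sum>C\<in>Pow {1..n}. (cl_mult n a b C)^2) \<le> (\<Sum>C\<in>Pow {1..n}. (clnorm n a * clnorm n b)^2)"
    by (rule sum_mono) (use pt in auto)
  also have "\<dots> = 2^n * (clnorm n a * clnorm n b)^2" by (simp add: card_Pow)
  finally have "clnorm n (cl_mult n a b) \<le> sqrt (2^n * (clnorm n a * clnorm n b)^2)"
    unfolding clnorm_def by (rule real_sqrt_le_mono)
  also have "\<dots> = sqrt (2^n) * (clnorm n a * clnorm n b)"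
    by (simp add: real_sqrt_mult clnorm_nonneg)
  also have "sqrt (2^n) = 2 powr (real n / 2)"
    by (simp add: powr_half_sqrt[symmetric] powr_realpow[symmetric] powr_powr)
  finally show ?thesis by (simp add: mult.assoc)
qed


definition sg :: "nat \<Rightarrow> nat set \<Rightarrow> real" where
  "sg l C = (-1) ^ (card {b\<in>C. b < l} + (if l \<in> C then 0 else 1))"

lemma sign_single:
  assumes "finite C"
  shows "cl_sign {l} (sdf {l} C) = sg l C"
proof -
  have e1: "{(a, b). a \<in> {l} \<and> b \<in> sdf {l} C \<and> b < a} = (\<lambda>b. (l, b)) ` {b\<in>C. b < l}"
    by auto
  have c1: "card {(a, b). a \<in> {l} \<and> b \<in> sdf {l} C \<and> b < a} = card {b\<in>C. b < l}"
    unfolding e1 by (rule card_image) (auto simp: inj_on_def)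
  have c2: "card ({l} \<inter> sdf {l} C) = (if l \<in> C then 0 else 1)" by auto
  show ?thesis unfolding cl_sign_def sg_def c1 c2 ..
qed

lemma sg_sq: "(sg l C)^2 = 1"
  unfolding sg_def by (simp flip: power_mult add: mult.commute power_mult)

lemma sg_swap_lt:
  assumes "l < m" "finite C"
  shows "sg m (sdf C {l, m}) * sg l (sdf C {l, m}) = - (sg l C * sg m C)"
proof -
  have a1: "{b \<in> sdf C {l, m}. b < l} = {b\<in>C. b < l}" using assms by auto
  have lm: "l \<notin> {b \<in> sdf C {l, m}. b < m}" if "l \<in> C" using that by auto
  have lm2: "l \<notin> {b \<in> C. b < m}" if "l \<notin> C" using that by auto
  have a2: "l \<in> C \<Longrightarrow> {b\<in>C. b < m} = insert l {b \<in> sdf C {l, m}. b < m}" using assms by auto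
  have a3: "l \<notin> C \<Longrightarrow> {b \<in> sdf C {l, m}. b < m} = insert l {b\<in>C. b < m}" using assms by auto
  have fin: "finite {b \<in> sdf C {l, m}. b < m}" "finite {b\<in>C. b < m}" using assms by auto
  have lC: "(l \<in> sdf C {l, m}) = (l \<notin> C)" "(m \<in> sdf C {l, m}) = (m \<notin> C)" using assms by auto
  show ?thesis
  proof (cases "l \<in> C")
    case True
    then have c: "card {b\<in>C. b < m} = Suc (card {b \<in> sdf C {l, m}. b < m})"
      using a2 lm fin by simp
    show ?thesis unfolding sg_def a1 lC c using True by (cases "m \<in> C") (simp_all add: power_add)
  next
    case False
    then have c: "card {b \<in> sdf C {l, m}. b < m} = Suc (card {b\<in>C. b < m})"
      using a3 lm2 fin by simp
    show ?thesis unfolding sg_def a1 lC c using False by (cases "m \<in> C") (simp_all add: power_add)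
  qed
qed

lemma sg_swap:
  assumes "l \<noteq> m" "finite C"
  shows "sg m (sdf C {l, m}) * sg l (sdf C {l, m}) = - (sg l C * sg m C)"
proof (cases "l < m")
  case True then show ?thesis using sg_swap_lt assms by blast
next
  case False
  then have "m < l" using assms by auto
  from sg_swap_lt[OF this assms(2)] show ?thesis
    by (simp add: insert_commute mult.commute)
qed

lemma sum_singletons:
  fixes n :: nat
  assumes "\<And>C. C \<in> Pow {1..n} \<Longrightarrow> card C \<noteq> 1 \<Longrightarrow> h C = 0"
  shows "(\<Sum>C\<in>Pow {1..n}. h C) = (\<Sum>l\<in>{1..n}. h {l})"
proof -
  have "(\<Sum>C\<in>Pow {1..n}. h C) = (\<Sum>C\<in>(\<lambda>l. {l}) ` {1..n}. h C)"
  proof (rule sum.mono_neutral_right)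
    show "\<forall>C\<in>Pow {1..n} - (\<lambda>l. {l}) ` {1..n}. h C = 0"
    proof
      fix C assume C: "C \<in> Pow {1..n} - (\<lambda>l. {l}) ` {1..n}"
      have "card C \<noteq> 1"
      proof
        assume "card C = 1"
        then obtain x where "C = {x}" by (auto simp: card_1_singleton_iff)
        with C show False by auto
      qed
      with C show "h C = 0" using assms by auto
    qed
  qed (simp, auto)
  also have "\<dots> = (\<Sum>l\<in>{1..n}. h {l})"
    by (subst sum.reindex) (auto simp: inj_on_def)
  finally show ?thesis .
qed

lemma paravec_zero: "x \<in> paravec n \<Longrightarrow> A \<in> Pow {1..n} \<Longrightarrow> card A \<noteq> 1 \<Longrightarrow> A \<noteq> {} \<Longrightarrow> x A = 0"
proof -
  assume x: "x \<in> paravec n" and A: "A \<in> Pow {1..n}" "card A \<noteq> 1" "A \<noteq> {}"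
  have "finite A" using A finite_subset by auto
  then have "card A \<noteq> 0" using A by auto
  then have "2 \<le> card A" using A by linarith
  then show "x A = 0" using x by (auto simp: paravec_def)
qed

lemma imag_zero:
  assumes "j \<in> imag_sphere n" "A \<in> Pow {1..n}" "card A \<noteq> 1" shows "j A = 0"
proof (cases "A = {}")
  case True then show ?thesis using assms by (simp add: imag_sphere_def)
next
  case False
  have "j \<in> paravec n" using assms by (simp add: imag_sphere_def)
  then show ?thesis using paravec_zero False assms by blast
qed

lemma mult_imag_expand:
  assumes j: "j \<in> imag_sphere n" and C: "C \<subseteq> {1..n}"
  shows "cl_mult n j c C = (\<Sum>l\<in>{1..n}. j {l} * sg l C * c (sdf {l} C))"
proof -
  have fC: "finite C" using C finite_subset by auto
  have "cl_mult n j c C = (\<Sum>A\<in>Pow {1..n}. cl_sign A (sdf A C) * j A * c (sdf A C))"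
    using C by (rule mult_expand)
  also have "\<dots> = (\<Sum>l\<in>{1..n}. cl_sign {l} (sdf {l} C) * j {l} * c (sdf {l} C))"
    by (rule sum_singletons) (use imag_zero[OF j] in auto)
  also have "\<dots> = (\<Sum>l\<in>{1..n}. j {l} * sg l C * c (sdf {l} C))"
    by (simp add: sign_single[OF fC] mult_ac)
  finally show ?thesis .
qed

lemma clnorm_sq: "(clnorm n a)^2 = (\<Sum>C\<in>Pow {1..n}. (a C)^2)"
  unfolding clnorm_def by (simp add: sum_nonneg)

lemma imag_norm1: "j \<in> imag_sphere n \<Longrightarrow> (\<Sum>l\<in>{1..n}. (j {l})^2) = 1"
  by (simp add: imag_sphere_def)

lemma mult_imag_norm:
  assumes j: "j \<in> imag_sphere n"
  shows "clnorm n (cl_mult n j c) = clnorm n c"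
proof -
  let ?P = "Pow {1..n}" and ?L = "{1..n}"
  define N where "N = (\<Sum>C\<in>?P. (c C)^2)"
  define T where "T l m = (\<Sum>C\<in>?P. sg l C * sg m C * c (sdf {l} C) * c (sdf {m} C))" for l m
  have Tll: "T l l = N" if "l \<in> ?L" for l
  proof -
    have "T l l = (\<Sum>C\<in>?P. (c (sdf C {l}))^2)"
      unfolding T_def
    proof (rule sum.cong[OF refl])
      fix C
      have e: "sdf {l} C = sdf C {l}" by blast
      have "sg l C * sg l C = 1" using sg_sq[of l C] by (simp add: power2_eq_square)
      then show "sg l C * sg l C * c (sdf {l} C) * c (sdf {l} C) = (c (sdf C {l}))^2"
        unfolding e by (simp add: power2_eq_square)
    qed
    also have "\<dots> = N" unfolding N_def using that by (intro sd_reindex) auto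
    finally show ?thesis .
  qed
  have Tlm: "T m l = - T l m" if "l \<in> ?L" "m \<in> ?L" "l \<noteq> m" for l m
  proof -
    have "T m l = (\<Sum>C\<in>?P. sg m (sdf C {l, m}) * sg l (sdf C {l, m}) *
        c (sdf {m} (sdf C {l, m})) * c (sdf {l} (sdf C {l, m})))"
      unfolding T_def using that by (intro sd_reindex[symmetric]) auto
    also have "\<dots> = (\<Sum>C\<in>?P. - (sg l C * sg m C * c (sdf {l} C) * c (sdf {m} C)))"
    proof (rule sum.cong[OF refl])
      fix C assume "C \<in> ?P"
      then have fC: "finite C" using finite_subset by auto
      have s1: "sdf {m} (sdf C {l, m}) = sdf {l} C" using that by auto
      have s2: "sdf {l} (sdf C {l, m}) = sdf {m} C" using that by auto
      show "sg m (sdf C {l, m}) * sg l (sdf C {l, m}) *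
        c (sdf {m} (sdf C {l, m})) * c (sdf {l} (sdf C {l, m})) =
        - (sg l C * sg m C * c (sdf {l} C) * c (sdf {m} C))"
        unfolding s1 s2 sg_swap[OF that(3) fC] by simp
    qed
    also have "\<dots> = - T l m" unfolding T_def by (simp add: sum_negf)
    finally show ?thesis .
  qed
  have Tsym: "T l m + T m l = (if l = m then 2 * N else 0)" if "l \<in> ?L" "m \<in> ?L" for l m
  proof (cases "l = m")
    case True then show ?thesis using Tll that by simp
  next
    case False then show ?thesis using Tlm[OF that False] by simp
  qed
  define S where "S = (\<Sum>l\<in>?L. \<Sum>m\<in>?L. j {l} * j {m} * T l m)"
  have sq: "(\<Sum>C\<in>?P. (cl_mult n j c C)^2) = S"
  proof -
    have "(\<Sum>C\<in>?P. (cl_mult n j c C)^2) =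
        (\<Sum>C\<in>?P. \<Sum>l\<in>?L. \<Sum>m\<in>?L. (j {l} * sg l C * c (sdf {l} C)) * (j {m} * sg m C * c (sdf {m} C)))"
      by (rule sum.cong[OF refl]) (simp add: mult_imag_expand[OF j] power2_eq_square sum_product)
    also have "\<dots> = (\<Sum>l\<in>?L. \<Sum>C\<in>?P. \<Sum>m\<in>?L. (j {l} * sg l C * c (sdf {l} C)) * (j {m} * sg m C * c (sdf {m} C)))"
      by (rule sum.swap)
    also have "\<dots> = (\<Sum>l\<in>?L. \<Sum>m\<in>?L. \<Sum>C\<in>?P. (j {l} * sg l C * c (sdf {l} C)) * (j {m} * sg m C * c (sdf {m} C)))"
      by (rule sum.cong[OF refl], rule sum.swap)
    also have "\<dots> = S" unfolding S_def T_def
      by (intro sum.cong refl) (simp add: sum_distrib_left mult_ac)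
    finally show ?thesis .
  qed
  have "S = (\<Sum>m\<in>?L. \<Sum>l\<in>?L. j {l} * j {m} * T l m)" unfolding S_def by (rule sum.swap)
  then have S2: "S = (\<Sum>l\<in>?L. \<Sum>m\<in>?L. j {l} * j {m} * T m l)" by (simp add: mult_ac)
  have "2 * S = S + S" by simp
  also have "\<dots> = (\<Sum>l\<in>?L. \<Sum>m\<in>?L. j {l} * j {m} * T l m) + (\<Sum>l\<in>?L. \<Sum>m\<in>?L. j {l} * j {m} * T m l)"
    by (subst (1) S_def, subst S2) (rule refl)
  also have "\<dots> = (\<Sum>l\<in>?L. \<Sum>m\<in>?L. j {l} * j {m} * (T l m + T m l))"
    by (simp only: sum.distrib[symmetric] distrib_left)
  finally have S2S: "2 * S = (\<Sum>l\<in>?L. \<Sum>m\<in>?L. j {l} * j {m} * (T l m + T m l))" .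
  have "\<dots> = (\<Sum>l\<in>?L. \<Sum>m\<in>?L. if l = m then j {l} * j {m} * (2 * N) else 0)"
    by (intro sum.cong refl) (simp add: Tsym)
  also have "\<dots> = (\<Sum>l\<in>?L. (j {l})^2 * (2 * N))"
    by (simp add: power2_eq_square)
  also have "\<dots> = (\<Sum>l\<in>?L. (j {l})^2) * (2 * N)" by (rule sum_distrib_right[symmetric])
  also have "\<dots> = 2 * N" by (simp only: imag_norm1[OF j] mult_1)
  finally have "S = N" using S2S by simp
  then show ?thesis unfolding clnorm_def using sq N_def by simp
qed



lemma mult_lin2:
  "cl_mult n a (\<lambda>A. r * b A + s * c A) C = r * cl_mult n a b C + s * cl_mult n a c C"
proof -
  have "\<And>A B. (if sdf A B = C then cl_sign A B * a A * (r * b B + s * c B) else 0) =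
     r * (if sdf A B = C then cl_sign A B * a A * b B else 0) +
     s * (if sdf A B = C then cl_sign A B * a A * c B else 0)"
    by (simp add: algebra_simps)
  then show ?thesis unfolding cl_mult_def by (simp add: sum.distrib sum_distrib_left)
qed

lemma mult_lin1:
  "cl_mult n (\<lambda>A. r * a A + s * b A) c C = r * cl_mult n a c C + s * cl_mult n b c C"
proof -
  have "\<And>A B. (if sdf A B = C then cl_sign A B * (r * a A + s * b A) * c B else 0) =
     r * (if sdf A B = C then cl_sign A B * a A * c B else 0) +
     s * (if sdf A B = C then cl_sign A B * b A * c B else 0)"
    by (simp add: algebra_simps)
  then show ?thesis unfolding cl_mult_def by (simp add: sum.distrib sum_distrib_left)
qed

lemma mult_neg2: "cl_mult n a (\<lambda>A. - b A) C = - cl_mult n a b C"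
  using mult_lin2[of n a "-1" b 0 b C] by simp

lemma mult_neg1: "cl_mult n (\<lambda>A. - a A) b C = - cl_mult n a b C"
  using mult_lin1[of n "-1" a 0 a b C] by simp

lemma mult_zero2: "cl_mult n a (\<lambda>A. 0) C = 0"
  using mult_lin2[of n a 0 a 0 a C] by simp

lemma mult_add2: "cl_mult n a (\<lambda>A. b A + c A) C = cl_mult n a b C + cl_mult n a c C"
  using mult_lin2[of n a 1 b 1 c C] by simp

lemma mult_add1: "cl_mult n (\<lambda>A. a A + b A) c C = cl_mult n a c C + cl_mult n b c C"
  using mult_lin1[of n 1 a 1 b c C] by simp

lemma clnorm_add_le: "clnorm n (\<lambda>A. p A + q A) \<le> clnorm n p + clnorm n q"
  unfolding clnorm_L2 by (rule L2_set_triangle_ineq)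

lemma clnorm_neg: "clnorm n (\<lambda>A. - p A) = clnorm n p"
  unfolding clnorm_def by simp

lemma clnorm_diff_le: "clnorm n (\<lambda>A. p A - q A) \<le> clnorm n p + clnorm n q"
  using clnorm_add_le[of n p "\<lambda>A. - q A"] clnorm_neg[of n q] by simp

lemma clnorm_scale: "clnorm n (\<lambda>A. r * p A) = \<bar>r\<bar> * clnorm n p"
  unfolding clnorm_def by (simp add: power_mult_distrib sum_distrib_left[symmetric] real_sqrt_mult)

lemma clnorm_half_add: "clnorm n (\<lambda>A. (p A + q A) / 2) \<le> (clnorm n p + clnorm n q) / 2"
proof -
  have "clnorm n (\<lambda>A. (p A + q A) / 2) = 1/2 * clnorm n (\<lambda>A. p A + q A)"
    using clnorm_scale[of n "1/2" "\<lambda>A. p A + q A"] by simp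
  then show ?thesis using clnorm_add_le[of n p q] by simp
qed

lemma clnorm_half_diff: "clnorm n (\<lambda>A. (p A - q A) / 2) \<le> (clnorm n p + clnorm n q) / 2"
proof -
  have "clnorm n (\<lambda>A. (p A - q A) / 2) = 1/2 * clnorm n (\<lambda>A. p A - q A)"
    using clnorm_scale[of n "1/2" "\<lambda>A. p A - q A"] by simp
  then show ?thesis using clnorm_diff_le[of n p q] by simp
qed

lemma slice_parts:
  fixes u v :: real
  assumes sd: "slice_decomp n f f0 f1" and j: "j \<in> imag_sphere n"
  defines "xp \<equiv> cl_add (cl_scalar u) (cl_scale v j)"
      and "xm \<equiv> cl_add (cl_scalar u) (cl_scale (- v) j)"
  shows "f0 u v = (\<lambda>A. (f xp A + f xm A) / 2)"
    and "cl_mult n j (f1 u v) = (\<lambda>A. (f xp A - f xm A) / 2)"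
proof -
  have fp: "f xp = cl_add (f0 u v) (cl_mult n j (f1 u v))"
    using sd j unfolding slice_decomp_def xp_def by blast
  have fm0: "f xm = cl_add (f0 u (-v)) (cl_mult n j (f1 u (-v)))"
    using sd j unfolding slice_decomp_def xm_def by blast
  have e0: "f0 u (-v) = f0 u v" and e1: "f1 u (-v) = (\<lambda>A. - f1 u v A)"
    using sd unfolding slice_decomp_def by auto
  have fm: "f xm A = f0 u v A - cl_mult n j (f1 u v) A" for A
    unfolding fm0 e0 e1 cl_add_def mult_neg2 by simp
  show "f0 u v = (\<lambda>A. (f xp A + f xm A) / 2)"
    by (rule ext) (simp add: fm fp cl_add_def)
  show "cl_mult n j (f1 u v) = (\<lambda>A. (f xp A - f xm A) / 2)"
    by (rule ext) (simp add: fm fp cl_add_def)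
qed

lemma slice_bounds:
  assumes sd: "slice_decomp n f f0 f1" and j: "j \<in> imag_sphere n"
  shows "clnorm n (f0 u v) \<le> (clnorm n (f (cl_add (cl_scalar u) (cl_scale v j)))
                              + clnorm n (f (cl_add (cl_scalar u) (cl_scale (- v) j)))) / 2"
    and "clnorm n (f1 u v) \<le> (clnorm n (f (cl_add (cl_scalar u) (cl_scale v j)))
                              + clnorm n (f (cl_add (cl_scalar u) (cl_scale (- v) j)))) / 2"
proof -
  show "clnorm n (f0 u v) \<le> (clnorm n (f (cl_add (cl_scalar u) (cl_scale v j)))
                              + clnorm n (f (cl_add (cl_scalar u) (cl_scale (- v) j)))) / 2"
    unfolding slice_parts(1)[OF sd j] by (rule clnorm_half_add)
  have "clnorm n (f1 u v) = clnorm n (cl_mult n j (f1 u v))"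
    using mult_imag_norm[OF j] by simp
  also have "\<dots> \<le> (clnorm n (f (cl_add (cl_scalar u) (cl_scale v j)))
                              + clnorm n (f (cl_add (cl_scalar u) (cl_scale (- v) j)))) / 2"
    unfolding slice_parts(2)[OF sd j] by (rule clnorm_half_diff)
  finally show "clnorm n (f1 u v) \<le> (clnorm n (f (cl_add (cl_scalar u) (cl_scale v j)))
                              + clnorm n (f (cl_add (cl_scalar u) (cl_scale (- v) j)))) / 2" .
qed


lemma para_decomp:
  fixes n :: nat and x :: cl
  assumes n: "1 \<le> n" and x: "x \<in> paravec n"
  defines "w \<equiv> (\<lambda>C. if C = {} then 0 else x C)"
  defines "v \<equiv> clnorm n w"
  defines "j \<equiv> (if v = 0 then cl_unit 1 else cl_scale (1 / v) w)"
  shows "j \<in> imag_sphere n" "x = cl_add (cl_scalar (x {})) (cl_scale v j)"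
        "cl_add (cl_scalar (x {})) (cl_scale (-v) j) = (\<lambda>C. if C = {} then x C else - x C)"
proof -
  have xcl: "x C = 0" if "\<not> C \<subseteq> {1..n}" for C
    using x that by (auto simp: paravec_def cl_def)
  have xpar: "x C = 0" if "2 \<le> card C" for C
    using x that by (auto simp: paravec_def)
  have v2: "v^2 = (\<Sum>l\<in>{1..n}. (x {l})^2)"
  proof -
    have "v^2 = (\<Sum>C\<in>Pow {1..n}. (w C)^2)" unfolding v_def by (rule clnorm_sq)
    also have "\<dots> = (\<Sum>l\<in>{1..n}. (w {l})^2)"
    proof (rule sum_singletons)
      fix C assume C: "C \<in> Pow {1..n}" "card C \<noteq> 1"
      show "(w C)^2 = 0"
      proof (cases "C = {}")
        case True then show ?thesis by (simp add: w_def)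
      next
        case False then show ?thesis using paravec_zero[OF x C] by (simp add: w_def)
      qed
    qed
    also have "\<dots> = (\<Sum>l\<in>{1..n}. (x {l})^2)" by (simp add: w_def)
    finally show ?thesis .
  qed
  have vnn: "v \<ge> 0" unfolding v_def by (rule clnorm_nonneg)
  have zero: "x C = 0" if "v = 0" "C \<noteq> {}" for C
  proof (cases "C \<subseteq> {1..n}")
    case True
    have "(\<Sum>C\<in>Pow {1..n}. (w C)^2) = 0" using that(1) clnorm_sq[of n w] by (simp add: v_def)
    then have "\<forall>C\<in>Pow {1..n}. (w C)^2 = 0" by (subst (asm) sum_nonneg_eq_0_iff) auto
    then have "w C = 0" using True by auto
    then show ?thesis using that(2) by (simp add: w_def)
  next
    case False then show ?thesis by (rule xcl)
  qed
  show "j \<in> imag_sphere n"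
  proof (cases "v = 0")
    case True
    have s: "(\<Sum>l = 1..n. (if {l} = {1::nat} then 1 else 0 :: real)^2) = 1"
    proof -
      have "(\<Sum>l = 1..n. (if {l} = {1::nat} then 1 else 0 :: real)^2) = (\<Sum>l = 1..n. if l = 1 then 1 else 0)"
        by (rule sum.cong) auto
      also have "\<dots> = 1" using n by (simp add: sum.delta)
      finally show ?thesis .
    qed
    have "cl_unit 1 \<in> imag_sphere n"
      unfolding imag_sphere_def paravec_def cl_def cl_unit_def
      using n s by (auto simp del: One_nat_def)
    then show ?thesis using True by (simp add: j_def)
  next
    case False
    have s: "(\<Sum>l = 1..n. (1 / v * x {l})^2) = 1"
    proof -
      have "(\<Sum>l = 1..n. (1 / v * x {l})^2) = (\<Sum>l = 1..n. (x {l})^2) / v^2"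
        by (simp add: power_mult_distrib sum_divide_distrib power_divide)
      also have "\<dots> = 1" using False by (simp only: v2[symmetric]) simp
      finally show ?thesis .
    qed
    have "cl_scale (1 / v) w \<in> imag_sphere n"
      unfolding imag_sphere_def paravec_def cl_def cl_scale_def
      using s xcl xpar by (auto simp: w_def)
    then show ?thesis using False by (simp add: j_def)
  qed
  show "x = cl_add (cl_scalar (x {})) (cl_scale v j)"
  proof (rule ext)
    fix C show "x C = cl_add (cl_scalar (x {})) (cl_scale v j) C"
      using zero by (cases "v = 0"; cases "C = {}") (auto simp: cl_add_def cl_scalar_def cl_scale_def j_def w_def)
  qed
  show "cl_add (cl_scalar (x {})) (cl_scale (-v) j) = (\<lambda>C. if C = {} then x C else - x C)"
  proof (rule ext)
    fix C show "cl_add (cl_scalar (x {})) (cl_scale (-v) j) C = (if C = {} then x C else - x C)"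
      using zero by (cases "v = 0"; cases "C = {}") (auto simp: cl_add_def cl_scalar_def cl_scale_def j_def w_def)
  qed
qed

lemma conj_para:
  assumes x: "x \<in> paravec n"
  shows "(\<lambda>C. if C = {} then x C else - x C) \<in> paravec n"
    and "clnorm n (\<lambda>C. if C = {} then x C else - x C) = clnorm n x"
proof -
  show "(\<lambda>C. if C = {} then x C else - x C) \<in> paravec n"
    using x by (auto simp: paravec_def cl_def)
  have "(\<lambda>C. (if C = {} then x C else - x C)^2) = (\<lambda>C. (x C)^2)" by auto
  then show "clnorm n (\<lambda>C. if C = {} then x C else - x C) = clnorm n x"
    unfolding clnorm_def by (metis (no_types))
qed



lemma joint_cont:
  fixes F Pu Pv :: "real \<Rightarrow> real \<Rightarrow> real"
  assumes du: "\<And>u v. ((\<lambda>t. F t v) has_real_derivative Pu u v) (at u)"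
      and dv: "\<And>u v. ((\<lambda>t. F u t) has_real_derivative Pv u v) (at v)"
      and cv: "continuous_on UNIV (\<lambda>z. Pv (fst z) (snd z))"
  shows "continuous_on UNIV (\<lambda>z. F (fst z) (snd z))"
proof (rule continuous_at_imp_continuous_on, intro ballI)
  fix z :: "real \<times> real"
  obtain x y where z: "z = (x, y)" by (cases z)
  have fx: "((\<lambda>x. F x y) has_derivative (*) (Pu x y)) (at x within UNIV)"
    using du[where u=x and v=y] by (simp add: has_field_derivative_def)
  have fy: "((\<lambda>y. F x y) has_derivative blinfun_apply (blinfun_scaleR_left (Pv x y))) (at y within UNIV)"
    for x y
  proof -
    have "blinfun_apply (blinfun_scaleR_left (Pv x y)) = (*) (Pv x y)" by (auto simp: fun_eq_iff)
    then show ?thesis using dv[where u=x and v=y] by (simp add: has_field_derivative_def)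
  qed
  have "isCont (\<lambda>z. Pv (fst z) (snd z)) (x, y)"
    using cv by (simp add: continuous_on_eq_continuous_at)
  then have "continuous (at (x, y)) (\<lambda>z. blinfun_scaleR_left (Pv (fst z) (snd z)))"
    by (rule bounded_linear.continuous[OF bounded_linear_blinfun_scaleR_left])
  then have fyc: "continuous (at (x, y) within UNIV \<times> UNIV) (\<lambda>(x, y). blinfun_scaleR_left (Pv x y))"
    by (simp add: case_prod_beta')
  have "((\<lambda>(x, y). F x y) has_derivative (\<lambda>(tx, ty). Pu x y * tx + blinfun_scaleR_left (Pv x y) ty))
      (at (x, y) within UNIV \<times> UNIV)"
    by (rule has_derivative_partialsI[OF fx fy fyc]) auto
  then have "continuous (at (x, y)) (\<lambda>(x, y). F x y)"
    using has_derivative_continuous by fastforce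
  then show "isCont (\<lambda>z. F (fst z) (snd z)) z"
    unfolding z by (simp add: case_prod_beta')
qed

lemma mult_deriv:
  assumes da: "\<And>A. ((\<lambda>t. a t A) has_real_derivative a' A) (at x)"
      and db: "\<And>A. ((\<lambda>t. b t A) has_real_derivative b' A) (at x)"
  shows "((\<lambda>t. cl_mult n (a t) (b t) C) has_real_derivative
            (cl_mult n a' (b x) C + cl_mult n (a x) b' C)) (at x)"
proof -
  have trm: "((\<lambda>t. if sdf A B = C then cl_sign A B * a t A * b t B else 0) has_real_derivative
      (if sdf A B = C then cl_sign A B * (a' A * b x B + a x A * b' B) else 0)) (at x)" for A B
  proof (cases "sdf A B = C")
    case True
    have "((\<lambda>t. cl_sign A B * (a t A * b t B)) has_real_derivative
        cl_sign A B * (a' A * b x B + b' B * a x A)) (at x)"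
      by (intro DERIV_cmult DERIV_mult da db)
    then show ?thesis using True by (simp add: mult_ac)
  next
    case False then show ?thesis by simp
  qed
  have "((\<lambda>t. cl_mult n (a t) (b t) C) has_real_derivative
      (\<Sum>A\<in>Pow {1..n}. \<Sum>B\<in>Pow {1..n}. if sdf A B = C then cl_sign A B * (a' A * b x B + a x A * b' B) else 0)) (at x)"
    unfolding cl_mult_def by (intro DERIV_sum trm)
  moreover have "(\<Sum>A\<in>Pow {1..n}. \<Sum>B\<in>Pow {1..n}. if sdf A B = C then cl_sign A B * (a' A * b x B + a x A * b' B) else 0)
      = cl_mult n a' (b x) C + cl_mult n (a x) b' C"
    unfolding cl_mult_def sum.distrib[symmetric]
    by (intro sum.cong refl) (simp add: algebra_simps)
  ultimately show ?thesis by simp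
qed

lemma cont_if_const:
  "continuous_on S f \<Longrightarrow> continuous_on S (\<lambda>z. if P then f z else 0)"
  by (cases P) auto

lemma mult_cont:
  assumes "\<And>A. continuous_on UNIV (\<lambda>z. a z A)" "\<And>A. continuous_on UNIV (\<lambda>z. b z A)"
  shows "continuous_on UNIV (\<lambda>z. cl_mult n (a z) (b z) C)"
  unfolding cl_mult_def
  by (intro continuous_on_sum cont_if_const continuous_intros assms)



lemma deriv_part:
  assumes sf: "slice_decomp n f F0 F1" and sg: "slice_decomp n g G0 G1"
  and H0: "H0 = (\<lambda>u v. cl_sub (cl_mult n (F0 u v) (G0 u v)) (cl_mult n (F1 u v) (G1 u v)))"
  and H1: "H1 = (\<lambda>u v. cl_add (cl_mult n (F1 u v) (G0 u v)) (cl_mult n (F0 u v) (G1 u v)))"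
  shows "\<exists>p0u p0v p1u p1v :: real \<Rightarrow> real \<Rightarrow> cl. \<forall>A.
        (\<forall>u v. ((\<lambda>t. H0 t v A) has_real_derivative p0u u v A) (at u) \<and>
               ((\<lambda>t. H0 u t A) has_real_derivative p0v u v A) (at v) \<and>
               ((\<lambda>t. H1 t v A) has_real_derivative p1u u v A) (at u) \<and>
               ((\<lambda>t. H1 u t A) has_real_derivative p1v u v A) (at v)) \<and>
        continuous_on UNIV (\<lambda>z. p0u (fst z) (snd z) A) \<and>
        continuous_on UNIV (\<lambda>z. p0v (fst z) (snd z) A) \<and>
        continuous_on UNIV (\<lambda>z. p1u (fst z) (snd z) A) \<and>
        continuous_on UNIV (\<lambda>z. p1v (fst z) (snd z) A) \<and>
        (\<forall>u v. p0u u v A = p1v u v A \<and> p0v u v A = - p1u u v A)"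
proof -
  obtain a0u a0v a1u a1v :: "real \<Rightarrow> real \<Rightarrow> cl" where fa: "\<forall>A.
        (\<forall>u v. ((\<lambda>t. F0 t v A) has_real_derivative a0u u v A) (at u) \<and>
               ((\<lambda>t. F0 u t A) has_real_derivative a0v u v A) (at v) \<and>
               ((\<lambda>t. F1 t v A) has_real_derivative a1u u v A) (at u) \<and>
               ((\<lambda>t. F1 u t A) has_real_derivative a1v u v A) (at v)) \<and>
        continuous_on UNIV (\<lambda>z. a0u (fst z) (snd z) A) \<and>
        continuous_on UNIV (\<lambda>z. a0v (fst z) (snd z) A) \<and>
        continuous_on UNIV (\<lambda>z. a1u (fst z) (snd z) A) \<and>
        continuous_on UNIV (\<lambda>z. a1v (fst z) (snd z) A) \<and>
        (\<forall>u v. a0u u v A = a1v u v A \<and> a0v u v A = - a1u u v A)"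
    using sf unfolding slice_decomp_def by blast
  obtain b0u b0v b1u b1v :: "real \<Rightarrow> real \<Rightarrow> cl" where gb: "\<forall>A.
        (\<forall>u v. ((\<lambda>t. G0 t v A) has_real_derivative b0u u v A) (at u) \<and>
               ((\<lambda>t. G0 u t A) has_real_derivative b0v u v A) (at v) \<and>
               ((\<lambda>t. G1 t v A) has_real_derivative b1u u v A) (at u) \<and>
               ((\<lambda>t. G1 u t A) has_real_derivative b1v u v A) (at v)) \<and>
        continuous_on UNIV (\<lambda>z. b0u (fst z) (snd z) A) \<and>
        continuous_on UNIV (\<lambda>z. b0v (fst z) (snd z) A) \<and>
        continuous_on UNIV (\<lambda>z. b1u (fst z) (snd z) A) \<and>
        continuous_on UNIV (\<lambda>z. b1v (fst z) (snd z) A) \<and>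
        (\<forall>u v. b0u u v A = b1v u v A \<and> b0v u v A = - b1u u v A)"
    using sg unfolding slice_decomp_def by blast
  have fd0u: "((\<lambda>t. F0 t v A) has_real_derivative a0u u v A) (at u)"
    and fd0v: "((\<lambda>t. F0 u t A) has_real_derivative a0v u v A) (at v)"
    and fd1u: "((\<lambda>t. F1 t v A) has_real_derivative a1u u v A) (at u)"
    and fd1v: "((\<lambda>t. F1 u t A) has_real_derivative a1v u v A) (at v)"
    and fc: "continuous_on UNIV (\<lambda>z. a0u (fst z) (snd z) A)"
       "continuous_on UNIV (\<lambda>z. a0v (fst z) (snd z) A)"
       "continuous_on UNIV (\<lambda>z. a1u (fst z) (snd z) A)"
       "continuous_on UNIV (\<lambda>z. a1v (fst z) (snd z) A)" for A u v
    using fa by blast+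
  have gd0u: "((\<lambda>t. G0 t v A) has_real_derivative b0u u v A) (at u)"
    and gd0v: "((\<lambda>t. G0 u t A) has_real_derivative b0v u v A) (at v)"
    and gd1u: "((\<lambda>t. G1 t v A) has_real_derivative b1u u v A) (at u)"
    and gd1v: "((\<lambda>t. G1 u t A) has_real_derivative b1v u v A) (at v)"
    and gc: "continuous_on UNIV (\<lambda>z. b0u (fst z) (snd z) A)"
       "continuous_on UNIV (\<lambda>z. b0v (fst z) (snd z) A)"
       "continuous_on UNIV (\<lambda>z. b1u (fst z) (snd z) A)"
       "continuous_on UNIV (\<lambda>z. b1v (fst z) (snd z) A)" for A u v
    using gb by blast+
  have cF0: "continuous_on UNIV (\<lambda>z. F0 (fst z) (snd z) A)" for A
    by (rule joint_cont[where Pu="\<lambda>u v. a0u u v A" and Pv="\<lambda>u v. a0v u v A"]) (rule fd0u fd0v fc)+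
  have cF1: "continuous_on UNIV (\<lambda>z. F1 (fst z) (snd z) A)" for A
    by (rule joint_cont[where Pu="\<lambda>u v. a1u u v A" and Pv="\<lambda>u v. a1v u v A"]) (rule fd1u fd1v fc)+
  have cG0: "continuous_on UNIV (\<lambda>z. G0 (fst z) (snd z) A)" for A
    by (rule joint_cont[where Pu="\<lambda>u v. b0u u v A" and Pv="\<lambda>u v. b0v u v A"]) (rule gd0u gd0v gc)+
  have cG1: "continuous_on UNIV (\<lambda>z. G1 (fst z) (snd z) A)" for A
    by (rule joint_cont[where Pu="\<lambda>u v. b1u u v A" and Pv="\<lambda>u v. b1v u v A"]) (rule gd1u gd1v gc)+
  define q0u where "q0u u v = (\<lambda>A. cl_mult n (a0u u v) (G0 u v) A + cl_mult n (F0 u v) (b0u u v) A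
      - (cl_mult n (a1u u v) (G1 u v) A + cl_mult n (F1 u v) (b1u u v) A))" for u v
  define q0v where "q0v u v = (\<lambda>A. cl_mult n (a0v u v) (G0 u v) A + cl_mult n (F0 u v) (b0v u v) A
      - (cl_mult n (a1v u v) (G1 u v) A + cl_mult n (F1 u v) (b1v u v) A))" for u v
  define q1u where "q1u u v = (\<lambda>A. cl_mult n (a1u u v) (G0 u v) A + cl_mult n (F1 u v) (b0u u v) A
      + (cl_mult n (a0u u v) (G1 u v) A + cl_mult n (F0 u v) (b1u u v) A))" for u v
  define q1v where "q1v u v = (\<lambda>A. cl_mult n (a1v u v) (G0 u v) A + cl_mult n (F1 u v) (b0v u v) A
      + (cl_mult n (a0v u v) (G1 u v) A + cl_mult n (F0 u v) (b1v u v) A))" for u v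
  have ea: "a1v u v = a0u u v" "a0v u v = (\<lambda>A. - a1u u v A)" for u v
    using fa by (auto simp: fun_eq_iff)
  have eb: "b1v u v = b0u u v" "b0v u v = (\<lambda>A. - b1u u v A)" for u v
    using gb by (auto simp: fun_eq_iff)
  show ?thesis
  proof (intro exI allI conjI)
    fix A u v
    show "((\<lambda>t. H0 t v A) has_real_derivative q0u u v A) (at u)"
      unfolding H0 cl_sub_def q0u_def
      by (intro DERIV_diff mult_deriv[where a="\<lambda>t. F0 t v" and b="\<lambda>t. G0 t v", simplified]
          mult_deriv[where a="\<lambda>t. F1 t v" and b="\<lambda>t. G1 t v", simplified]) (rule fd0u fd0v fd1u fd1v gd0u gd0v gd1u gd1v fc gc)+
    show "((\<lambda>t. H0 u t A) has_real_derivative q0v u v A) (at v)"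
      unfolding H0 cl_sub_def q0v_def
      by (intro DERIV_diff mult_deriv[where a="\<lambda>t. F0 u t" and b="\<lambda>t. G0 u t", simplified]
          mult_deriv[where a="\<lambda>t. F1 u t" and b="\<lambda>t. G1 u t", simplified]) (rule fd0u fd0v fd1u fd1v gd0u gd0v gd1u gd1v fc gc)+
    show "((\<lambda>t. H1 t v A) has_real_derivative q1u u v A) (at u)"
      unfolding H1 cl_add_def q1u_def
      by (intro DERIV_add mult_deriv[where a="\<lambda>t. F1 t v" and b="\<lambda>t. G0 t v", simplified]
          mult_deriv[where a="\<lambda>t. F0 t v" and b="\<lambda>t. G1 t v", simplified]) (rule fd0u fd0v fd1u fd1v gd0u gd0v gd1u gd1v fc gc)+
    show "((\<lambda>t. H1 u t A) has_real_derivative q1v u v A) (at v)"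
      unfolding H1 cl_add_def q1v_def
      by (intro DERIV_add mult_deriv[where a="\<lambda>t. F1 u t" and b="\<lambda>t. G0 u t", simplified]
          mult_deriv[where a="\<lambda>t. F0 u t" and b="\<lambda>t. G1 u t", simplified]) (rule fd0u fd0v fd1u fd1v gd0u gd0v gd1u gd1v fc gc)+
    show "q0u u v A = q1v u v A"
      unfolding q0u_def q1v_def ea eb mult_neg1 mult_neg2 by simp
    show "q0v u v A = - q1u u v A"
      unfolding q1u_def q0v_def ea eb mult_neg1 mult_neg2 by simp
  next
    fix A
    show "continuous_on UNIV (\<lambda>z. q0u (fst z) (snd z) A)"
      unfolding q0u_def
      by (intro continuous_intros mult_cont cF0 cF1 cG0 cG1) (rule fd0u fd0v fd1u fd1v gd0u gd0v gd1u gd1v fc gc)+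
    show "continuous_on UNIV (\<lambda>z. q0v (fst z) (snd z) A)"
      unfolding q0v_def
      by (intro continuous_intros mult_cont cF0 cF1 cG0 cG1) (rule fd0u fd0v fd1u fd1v gd0u gd0v gd1u gd1v fc gc)+
    show "continuous_on UNIV (\<lambda>z. q1u (fst z) (snd z) A)"
      unfolding q1u_def
      by (intro continuous_intros mult_cont cF0 cF1 cG0 cG1) (rule fd0u fd0v fd1u fd1v gd0u gd0v gd1u gd1v fc gc)+
    show "continuous_on UNIV (\<lambda>z. q1v (fst z) (snd z) A)"
      unfolding q1v_def
      by (intro continuous_intros mult_cont cF0 cF1 cG0 cG1) (rule fd0u fd0v fd1u fd1v gd0u gd0v gd1u gd1v fc gc)+
  qed
qed



lemma imag_clnorm: "j \<in> imag_sphere n \<Longrightarrow> clnorm n j = 1"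
proof -
  assume j: "j \<in> imag_sphere n"
  have "(\<Sum>C\<in>Pow {1..n}. (j C)^2) = (\<Sum>l\<in>{1..n}. (j {l})^2)"
    by (rule sum_singletons) (simp add: imag_zero[OF j])
  then show ?thesis unfolding clnorm_def using imag_norm1[OF j] by simp
qed

lemma alg_part:
  assumes sf: "slice_decomp n f F0 F1" and sg: "slice_decomp n g G0 G1"
  and H0: "H0 = (\<lambda>u v. cl_sub (cl_mult n (F0 u v) (G0 u v)) (cl_mult n (F1 u v) (G1 u v)))"
  and H1: "H1 = (\<lambda>u v. cl_add (cl_mult n (F1 u v) (G0 u v)) (cl_mult n (F0 u v) (G1 u v)))"
  and S: "\<And>x. S x = cl_add (H0 (x {}) (clnorm n (\<lambda>C. if C = {} then 0 else x C)))
     (cl_mult n (if clnorm n (\<lambda>C. if C = {} then 0 else x C) = 0 then cl_unit 1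
        else cl_scale (1 / clnorm n (\<lambda>C. if C = {} then 0 else x C)) (\<lambda>C. if C = {} then 0 else x C))
       (H1 (x {}) (clnorm n (\<lambda>C. if C = {} then 0 else x C))))"
  shows "(\<forall>u v. H0 u v \<in> cl n \<and> H1 u v \<in> cl n) \<and>
     (\<forall>u v A. H0 u (-v) A = H0 u v A \<and> H1 u (-v) A = - H1 u v A) \<and>
     (\<forall>u v j. j \<in> imag_sphere n \<longrightarrow>
        S (cl_add (cl_scalar u) (cl_scale v j)) = cl_add (H0 u v) (cl_mult n j (H1 u v)))"
proof (intro conjI allI impI)
  fix u v
  show "H0 u v \<in> cl n" "H1 u v \<in> cl n"
    unfolding H0 H1 cl_def cl_sub_def cl_add_def by (auto simp: mult_outside)
next
  have pF: "F0 u (-v) = F0 u v" "F1 u (-v) = (\<lambda>A. - F1 u v A)" for u v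
    using sf unfolding slice_decomp_def by (auto simp: fun_eq_iff)
  have pG: "G0 u (-v) = G0 u v" "G1 u (-v) = (\<lambda>A. - G1 u v A)" for u v
    using sg unfolding slice_decomp_def by (auto simp: fun_eq_iff)
  show pH0: "H0 u (-v) A = H0 u v A" for u v A
    unfolding H0 cl_sub_def pF pG mult_neg1 mult_neg2 by simp
  show pH1: "H1 u (-v) A = - H1 u v A" for u v A
    unfolding H1 cl_add_def pF pG mult_neg1 mult_neg2 by simp
  fix u v j assume j: "j \<in> imag_sphere n"
  define x where "x = cl_add (cl_scalar u) (cl_scale v j)"
  have j0: "j {} = 0" using j by (simp add: imag_sphere_def)
  have x0: "x {} = u" unfolding x_def cl_add_def cl_scalar_def cl_scale_def using j0 by simp
  have w: "(\<lambda>C. if C = {} then 0 else x C) = (\<lambda>C. v * j C)"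
    unfolding x_def cl_add_def cl_scalar_def cl_scale_def using j0 by (auto simp: fun_eq_iff)
  have nw: "clnorm n (\<lambda>C. v * j C) = \<bar>v\<bar>" using clnorm_scale[of n v j] imag_clnorm[OF j] by simp
  have Sx: "S x = cl_add (H0 u \<bar>v\<bar>) (cl_mult n (if \<bar>v\<bar> = 0 then cl_unit 1
        else cl_scale (1 / \<bar>v\<bar>) (\<lambda>C. v * j C)) (H1 u \<bar>v\<bar>))"
    unfolding S x0 w nw ..
  have key: "cl_add (H0 u \<bar>v\<bar>) (cl_mult n (if \<bar>v\<bar> = 0 then cl_unit 1
        else cl_scale (1 / \<bar>v\<bar>) (\<lambda>C. v * j C)) (H1 u \<bar>v\<bar>)) = cl_add (H0 u v) (cl_mult n j (H1 u v))"
  proof (cases v "0::real" rule: linorder_cases)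
    case less
    have e1: "cl_scale (1 / \<bar>v\<bar>) (\<lambda>C. v * j C) = (\<lambda>C. - j C)"
      using less by (auto simp: cl_scale_def fun_eq_iff)
    have e2: "H1 u \<bar>v\<bar> = (\<lambda>A. - H1 u v A)" "H0 u \<bar>v\<bar> = H0 u v"
      using less pH0 pH1 by (auto simp: fun_eq_iff)
    show ?thesis using less unfolding e1 e2
      by (auto simp: fun_eq_iff cl_add_def mult_neg1 mult_neg2)
  next
    case equal
    have e2: "H1 u 0 = (\<lambda>A. 0)" using pH1[of u 0] by (auto simp: fun_eq_iff)
    show ?thesis using equal
      by (simp only: e2 abs_zero if_True) (simp add: fun_eq_iff cl_add_def mult_zero2)
  next
    case greater
    have e1: "cl_scale (1 / \<bar>v\<bar>) (\<lambda>C. v * j C) = j"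
      using greater by (auto simp: cl_scale_def fun_eq_iff)
    show ?thesis using greater unfolding e1 by simp
  qed
  show "S (cl_add (cl_scalar u) (cl_scale v j)) = cl_add (H0 u v) (cl_mult n j (H1 u v))"
    using Sx key unfolding x_def by simp
qed



lemma A_bound:
  assumes h: "h \<in> A_space n \<rho> s" and y: "y \<in> paravec n"
  shows "clnorm n (h y) \<le> A_norm n \<rho> s h * exp (s * clnorm n y powr \<rho> (clnorm n y))"
proof -
  let ?E = "exp (s * clnorm n y powr \<rho> (clnorm n y))"
  have "A_weight n \<rho> s h y \<le> A_norm n \<rho> s h"
    unfolding A_norm_def using h y by (intro cSUP_upper) (auto simp: A_space_def)
  then have "A_weight n \<rho> s h y * ?E \<le> A_norm n \<rho> s h * ?E"
    by (rule mult_right_mono) simp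
  moreover have "A_weight n \<rho> s h y * ?E = clnorm n (h y)"
    unfolding A_weight_def by (simp add: exp_minus field_simps)
  ultimately show ?thesis by simp
qed

lemma paravec_nonempty: "(\<lambda>C. 0) \<in> paravec n"
  by (simp add: paravec_def cl_def)

lemma clnorm_cl_add: "clnorm n (cl_add a b) \<le> clnorm n a + clnorm n b"
  unfolding cl_add_def by (rule clnorm_add_le)

lemma clnorm_cl_sub: "clnorm n (cl_sub a b) \<le> clnorm n a + clnorm n b"
  unfolding cl_sub_def by (rule clnorm_diff_le)

theorem lemma3p13:
  fixes n :: nat and \<rho> :: "real \<Rightarrow> real" and \<sigma> \<tau> :: real and f g :: "cl \<Rightarrow> cl"
  assumes "1 \<le> n"
    and "proximate_order \<rho>"
    and "\<sigma> > 0" and "\<tau> > 0"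
    and "f \<in> A_space n \<rho> \<sigma>" and "g \<in> A_space n \<rho> \<tau>"
  shows "star_L n f g \<in> A_space n \<rho> (\<sigma> + \<tau>) \<and>
         A_norm n \<rho> (\<sigma> + \<tau>) (star_L n f g)
           \<le> 2 powr ((real n + 4) / 2) * A_norm n \<rho> \<sigma> f * A_norm n \<rho> \<tau> g"
proof -
  note n = assms(1) and fA = assms(5) and gA = assms(6)
  define pf where "pf = (SOME p. slice_decomp n f (fst p) (snd p))"
  define pg where "pg = (SOME p. slice_decomp n g (fst p) (snd p))"
  have sf: "slice_decomp n f (fst pf) (snd pf)"
  proof -
    obtain f0 f1 where "slice_decomp n f f0 f1" using fA by (auto simp: A_space_def SM_L_def)
    then have "\<exists>p. slice_decomp n f (fst p) (snd p)" by (intro exI[of _ "(f0, f1)"]) simp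
    then show ?thesis unfolding pf_def by (rule someI_ex)
  qed
  have sg: "slice_decomp n g (fst pg) (snd pg)"
  proof -
    obtain f0 f1 where "slice_decomp n g f0 f1" using gA by (auto simp: A_space_def SM_L_def)
    then have "\<exists>p. slice_decomp n g (fst p) (snd p)" by (intro exI[of _ "(f0, f1)"]) simp
    then show ?thesis unfolding pg_def by (rule someI_ex)
  qed
  define F0 where "F0 = fst pf"
  define F1 where "F1 = snd pf"
  define G0 where "G0 = fst pg"
  define G1 where "G1 = snd pg"
  note sf = sf[folded F0_def F1_def] and sg = sg[folded G0_def G1_def]
  define H0 where "H0 = (\<lambda>u v. cl_sub (cl_mult n (F0 u v) (G0 u v)) (cl_mult n (F1 u v) (G1 u v)))"
  define H1 where "H1 = (\<lambda>u v. cl_add (cl_mult n (F1 u v) (G0 u v)) (cl_mult n (F0 u v) (G1 u v)))"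
  have S: "star_L n f g x = cl_add (H0 (x {}) (clnorm n (\<lambda>C. if C = {} then 0 else x C)))
     (cl_mult n (if clnorm n (\<lambda>C. if C = {} then 0 else x C) = 0 then cl_unit 1
        else cl_scale (1 / clnorm n (\<lambda>C. if C = {} then 0 else x C)) (\<lambda>C. if C = {} then 0 else x C))
       (H1 (x {}) (clnorm n (\<lambda>C. if C = {} then 0 else x C))))" for x
    unfolding star_L_def Let_def H0_def H1_def F0_def F1_def G0_def G1_def pf_def pg_def
    by (simp add: case_prod_beta)
  have sd: "slice_decomp n (star_L n f g) H0 H1"
    using alg_part[OF sf sg H0_def H1_def S] deriv_part[OF sf sg H0_def H1_def]
    unfolding slice_decomp_def by (elim conjE) (intro conjI; assumption)
  define Nf where "Nf = A_norm n \<rho> \<sigma> f"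
  define Ng where "Ng = A_norm n \<rho> \<tau> g"
  define K where "K = 2 powr (real n / 2)"
  have Kpos: "K \<ge> 0" unfolding K_def by simp
  have pt: "A_weight n \<rho> (\<sigma> + \<tau>) (star_L n f g) x \<le> 4 * K * Nf * Ng" if x: "x \<in> paravec n" for x
  proof -
    define w where "w = (\<lambda>C. if C = {} then 0 else x C)"
    define v where "v = clnorm n w"
    define j where "j = (if v = 0 then cl_unit 1 else cl_scale (1 / v) w)"
    define u where "u = x {}"
    define xb where "xb = (\<lambda>C. if C = {} then x C else - x C)"
    define R where "R = clnorm n x powr \<rho> (clnorm n x)"
    have pd1: "j \<in> imag_sphere n" using para_decomp(1)[OF n x] unfolding j_def v_def w_def .
    have pd2: "cl_add (cl_scalar u) (cl_scale v j) = x"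
      using para_decomp(2)[OF n x] unfolding j_def v_def w_def u_def by simp
    have pd3: "cl_add (cl_scalar u) (cl_scale (-v) j) = xb"
      using para_decomp(3)[OF n x] unfolding j_def v_def w_def u_def xb_def .
    have Sx: "star_L n f g x = cl_add (H0 u v) (cl_mult n j (H1 u v))"
      unfolding S u_def v_def j_def w_def ..
    have fx: "clnorm n (f x) \<le> Nf * exp (\<sigma> * R)" "clnorm n (f xb) \<le> Nf * exp (\<sigma> * R)"
      using A_bound[OF fA x] A_bound[OF fA conj_para(1)[OF x]] conj_para(2)[OF x]
      unfolding Nf_def R_def xb_def by simp_all
    have gx: "clnorm n (g x) \<le> Ng * exp (\<tau> * R)" "clnorm n (g xb) \<le> Ng * exp (\<tau> * R)"
      using A_bound[OF gA x] A_bound[OF gA conj_para(1)[OF x]] conj_para(2)[OF x]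
      unfolding Ng_def R_def xb_def by simp_all
    have bF0: "clnorm n (F0 u v) \<le> Nf * exp (\<sigma> * R)"
      using slice_bounds(1)[OF sf pd1, of u v] fx unfolding pd2 pd3 by simp
    have bF1: "clnorm n (F1 u v) \<le> Nf * exp (\<sigma> * R)"
      using slice_bounds(2)[OF sf pd1, of u v] fx unfolding pd2 pd3 by simp
    have bG0: "clnorm n (G0 u v) \<le> Ng * exp (\<tau> * R)"
      using slice_bounds(1)[OF sg pd1, of u v] gx unfolding pd2 pd3 by simp
    have bG1: "clnorm n (G1 u v) \<le> Ng * exp (\<tau> * R)"
      using slice_bounds(2)[OF sg pd1, of u v] gx unfolding pd2 pd3 by simp
    let ?a0 = "clnorm n (F0 u v)" and ?a1 = "clnorm n (F1 u v)"
    let ?b0 = "clnorm n (G0 u v)" and ?b1 = "clnorm n (G1 u v)"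
    have "clnorm n (star_L n f g x) \<le> clnorm n (H0 u v) + clnorm n (cl_mult n j (H1 u v))"
      unfolding Sx by (rule clnorm_cl_add)
    also have "\<dots> = clnorm n (H0 u v) + clnorm n (H1 u v)"
      using mult_imag_norm[OF pd1] by simp
    also have "\<dots> \<le> (K * ?a0 * ?b0 + K * ?a1 * ?b1) + (K * ?a1 * ?b0 + K * ?a0 * ?b1)"
    proof (rule add_mono)
      show "clnorm n (H0 u v) \<le> K * ?a0 * ?b0 + K * ?a1 * ?b1"
        unfolding H0_def K_def using clnorm_cl_sub mult_norm add_mono order_trans by metis
      show "clnorm n (H1 u v) \<le> K * ?a1 * ?b0 + K * ?a0 * ?b1"
        unfolding H1_def K_def using clnorm_cl_add mult_norm add_mono order_trans by metis
    qed
    also have "\<dots> = K * ((?a0 + ?a1) * (?b0 + ?b1))" by (simp add: algebra_simps)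
    also have "\<dots> \<le> K * ((2 * (Nf * exp (\<sigma> * R))) * (2 * (Ng * exp (\<tau> * R))))"
      using bF0 bF1 bG0 bG1 Kpos
      by (intro mult_left_mono mult_mono) (auto simp: clnorm_nonneg add_nonneg_nonneg intro: order_trans[OF clnorm_nonneg])
    finally have main: "clnorm n (star_L n f g x) \<le> 4 * K * Nf * Ng * exp ((\<sigma> + \<tau>) * R)"
      by (simp add: algebra_simps exp_add)
    have "A_weight n \<rho> (\<sigma> + \<tau>) (star_L n f g) x = clnorm n (star_L n f g x) * exp (- (\<sigma> + \<tau>) * R)"
      unfolding A_weight_def R_def ..
    also have "\<dots> \<le> 4 * K * Nf * Ng * exp ((\<sigma> + \<tau>) * R) * exp (- (\<sigma> + \<tau>) * R)"
      by (rule mult_right_mono[OF main]) simp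
    also have "\<dots> = 4 * K * Nf * Ng * (exp ((\<sigma> + \<tau>) * R) * exp (- (\<sigma> + \<tau>) * R))"
      by (simp only: mult.assoc)
    also have "exp ((\<sigma> + \<tau>) * R) * exp (- (\<sigma> + \<tau>) * R) = 1"
      by (simp add: algebra_simps flip: exp_add)
    also have "4 * K * Nf * Ng * 1 = 4 * K * Nf * Ng" by simp
    finally show ?thesis .
  qed
  have bdd: "bdd_above (A_weight n \<rho> (\<sigma> + \<tau>) (star_L n f g) ` paravec n)"
    using pt by (intro bdd_aboveI2) blast
  have inA: "star_L n f g \<in> A_space n \<rho> (\<sigma> + \<tau>)"
    unfolding A_space_def SM_L_def using sd bdd by blast
  have "A_norm n \<rho> (\<sigma> + \<tau>) (star_L n f g) \<le> 4 * K * Nf * Ng"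
    unfolding A_norm_def using pt paravec_nonempty by (intro cSUP_least) blast+
  also have "4 * K = 2 powr ((real n + 4) / 2)"
    unfolding K_def by (simp add: add_divide_distrib powr_add)
  finally show ?thesis using inA unfolding Nf_def Ng_def by simp
qed

end
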